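(* Consider a Fragile multi-CPR Game with $n\ge1$ players and $m\ge1$ CPRs satisfying the Assumption below, with constraint policies $\vartheta_i$ as below. Then there exists at most one Generalized Nash equilibrium $\mathbf{x}=(\mathbf{x}_1,\dots,\mathbf{x}_n)$ for which $\mathbf{x}_i$ is of Type I for all $i\in[n]$.
   Context: Let $[k]=\{1,\dots,k\}$, $C_m=\{(x_1,\dots,x_m)\in[0,1]^m:\sum_j x_j\le1\}$, $\mathcal{C}_n=\prod_{i\in[n]}C_m$, $\mathcal{C}_{-i}=\prod_{[n]\setminus\{i\}}C_m$. A profile is $\mathbf{x}=(\mathbf{x}_1,\dots,\mathbf{x}_n)\in\mathcal{C}_n$, $\mathbf{x}_i=(x_{i1},\dots,x_{im})$; write $\mathbf{x}=(\mathbf{x}_i,\mathbf{x}_{-i})$. Put $\mathbf{x}_T^{(j)}=\sum_i x_{ij}$, $\mathbf{x}_T^{j|i}=\sum_{\ell\ne i}x_{\ell j}$. Each CPR $j$ has a return rate $\mathcal{R}_j(t)>1$ and failure probability $p_j(t)\in[0,1]$; each player $i$ has parameters $a_i,k_i$. Effective rate: $\mathcal{F}_{ij}(t)=(\mathcal{R}_j(t)-1)^{a_i}(1-p_j(t))-k_ip_j(t)$; utility $\mathcal{V}_i(\mathbf{x}_i;\mathbf{x}_{-i})=\sum_j x_{ij}^{a_i}\mathcal{F}_{ij}(\mathbf{x}_T^{(j)})$. Assumption: (1) $p_j(0)=0$, $p_j(t)=1$ for $t\ge1$; (2) $a_i\in(0,1]$, $k_i>0$; (3) each $\mathcal{F}_{ij}$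 (continuous on $[0,1]$) has strictly negative first and second derivatives on $(0,1)$. Let $\omega_{ij}\in(0,1)$ be the unique zero of $\mathcal{F}_{ij}$ in $(0,1)$. Active CPRs: $A(\mathbf{x}_{-i})=\{j:\mathbf{x}_T^{j|i}<\omega_{ij}\}$. Constraint policy: $\vartheta_i(\mathbf{x}_{-i})=C_m\cap\big(\prod_{j\in A(\mathbf{x}_{-i})}[0,\omega_{ij}-\mathbf{x}_T^{j|i}]\times\prod_{j\notin A(\mathbf{x}_{-i})}\{0\}\big)$. A Generalized Nash equilibrium (GNE) is $\mathbf{x}\in\mathcal{C}_n$ with, for all $i$, $\mathbf{x}_i\in\vartheta_i(\mathbf{x}_{-i})$ and $\mathcal{V}_i(\mathbf{x}_i;\mathbf{x}_{-i})\ge\mathcal{V}_i(\mathbf{y};\mathbf{x}_{-i})$ for all $\mathbf{y}\in\vartheta_i(\mathbf{x}_{-i})$. Let $\psi_{ij}(x;s)=x\,\mathcal{F}_{ij}'(x+s)+a_i\mathcal{F}_{ij}(x+s)$. For a GNE $\mathbf{x}$ and $i\in[n]$, let $J_{\mathbf{x}_{-i}}=\{j\in A(\mathbf{x}_{-i}):x_{ij}\ne0\}$. Then $\mathbf{x}_i$ is of Type I if $\sum_{j\in J_{\mathbf{x}_{-i}}}x_{ij}<1$ and $\psi_{ij}(x_{ij};\mathbf{x}_T^{j|i})=0$ for all $j\in J_{\mathbf{x}_{-i}}$; it is of Type II if $\sum_{j\in J_{\mathbf{x}_{-i}}}x_{ij}=1$ and there is $\kappa_0\ge0$ with $x_{ij}^{a_i-1}\psi_{ij}(x_{ij};\mathbf{x}_T^{j|i})=\kappa_0$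 for all $j\in J_{\mathbf{x}_{-i}}$. *)

theory Defs
  imports "HOL-Analysis.Analysis"
begin

text \<open>Players are indexed by {1..n}, CPRs by {1..m}.
  R j t: return rate of CPR j; p j t: failure probability of CPR j;
  a i, k i: parameters of player i. A profile is x :: nat => nat => real,
  x i j being the investment of player i in CPR j.\<close>

definition Feff :: "(nat \<Rightarrow> real \<Rightarrow> real) \<Rightarrow> (nat \<Rightarrow> real \<Rightarrow> real) \<Rightarrow> (nat \<Rightarrow> real) \<Rightarrow> (nat \<Rightarrow> real)
    \<Rightarrow> nat \<Rightarrow> nat \<Rightarrow> real \<Rightarrow> real" where
  "Feff R p a k i j t = (R j t - 1) powr (a i) * (1 - p j t) - k i * p j t"

definition omega :: "(nat \<Rightarrow> real \<Rightarrow> real) \<Rightarrow> (nat \<Rightarrow> real \<Rightarrow> real) \<Rightarrow> (nat \<Rightarrow> real) \<Rightarrow> (nat \<Rightarrow> real)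
    \<Rightarrow> nat \<Rightarrow> nat \<Rightarrow> real" where
  "omega R p a k i j = (THE w. w \<in> {0<..<1} \<and> Feff R p a k i j w = 0)"

definition Cm :: "nat \<Rightarrow> (nat \<Rightarrow> real) set" where
  "Cm m = {v. (\<forall>j\<in>{1..m}. 0 \<le> v j \<and> v j \<le> 1) \<and> (\<Sum>j=1..m. v j) \<le> 1}"

definition xT_minus :: "nat \<Rightarrow> (nat \<Rightarrow> nat \<Rightarrow> real) \<Rightarrow> nat \<Rightarrow> nat \<Rightarrow> real" where
  "xT_minus n x i j = (\<Sum>l\<in>{1..n} - {i}. x l j)"

definition util :: "(nat \<Rightarrow> real \<Rightarrow> real) \<Rightarrow> (nat \<Rightarrow> real \<Rightarrow> real) \<Rightarrow> (nat \<Rightarrow> real) \<Rightarrow> (nat \<Rightarrow> real)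
    \<Rightarrow> nat \<Rightarrow> nat \<Rightarrow> nat \<Rightarrow> (nat \<Rightarrow> real) \<Rightarrow> (nat \<Rightarrow> nat \<Rightarrow> real) \<Rightarrow> real" where
  "util R p a k n m i v x = (\<Sum>j=1..m. v j powr (a i) * Feff R p a k i j (v j + xT_minus n x i j))"

definition active :: "(nat \<Rightarrow> real \<Rightarrow> real) \<Rightarrow> (nat \<Rightarrow> real \<Rightarrow> real) \<Rightarrow> (nat \<Rightarrow> real) \<Rightarrow> (nat \<Rightarrow> real)
    \<Rightarrow> nat \<Rightarrow> nat \<Rightarrow> nat \<Rightarrow> (nat \<Rightarrow> nat \<Rightarrow> real) \<Rightarrow> nat set" where
  "active R p a k n m i x = {j \<in> {1..m}. xT_minus n x i j < omega R p a k i j}"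

definition policy :: "(nat \<Rightarrow> real \<Rightarrow> real) \<Rightarrow> (nat \<Rightarrow> real \<Rightarrow> real) \<Rightarrow> (nat \<Rightarrow> real) \<Rightarrow> (nat \<Rightarrow> real)
    \<Rightarrow> nat \<Rightarrow> nat \<Rightarrow> nat \<Rightarrow> (nat \<Rightarrow> nat \<Rightarrow> real) \<Rightarrow> (nat \<Rightarrow> real) set" where
  "policy R p a k n m i x = {v \<in> Cm m. \<forall>j\<in>{1..m}.
      (j \<in> active R p a k n m i x \<longrightarrow> 0 \<le> v j \<and> v j \<le> omega R p a k i j - xT_minus n x i j) \<and>
      (j \<notin> active R p a k n m i x \<longrightarrow> v j = 0)}"

definition is_GNE :: "(nat \<Rightarrow> real \<Rightarrow> real) \<Rightarrow> (nat \<Rightarrow> real \<Rightarrow> real) \<Rightarrow> (nat \<Rightarrow> real) \<Rightarrow> (nat \<Rightarrow> real)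
    \<Rightarrow> nat \<Rightarrow> nat \<Rightarrow> (nat \<Rightarrow> nat \<Rightarrow> real) \<Rightarrow> bool" where
  "is_GNE R p a k n m x \<longleftrightarrow> (\<forall>i\<in>{1..n}. x i \<in> Cm m) \<and>
     (\<forall>i\<in>{1..n}. x i \<in> policy R p a k n m i x \<and>
        (\<forall>y\<in>policy R p a k n m i x. util R p a k n m i (x i) x \<ge> util R p a k n m i y x))"

definition psi :: "(nat \<Rightarrow> real \<Rightarrow> real) \<Rightarrow> (nat \<Rightarrow> real \<Rightarrow> real) \<Rightarrow> (nat \<Rightarrow> real) \<Rightarrow> (nat \<Rightarrow> real)
    \<Rightarrow> nat \<Rightarrow> nat \<Rightarrow> real \<Rightarrow> real \<Rightarrow> real" where
  "psi R p a k i j y s = y * deriv (Feff R p a k i j) (y + s) + a i * Feff R p a k i j (y + s)"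

definition Jset :: "(nat \<Rightarrow> real \<Rightarrow> real) \<Rightarrow> (nat \<Rightarrow> real \<Rightarrow> real) \<Rightarrow> (nat \<Rightarrow> real) \<Rightarrow> (nat \<Rightarrow> real)
    \<Rightarrow> nat \<Rightarrow> nat \<Rightarrow> nat \<Rightarrow> (nat \<Rightarrow> nat \<Rightarrow> real) \<Rightarrow> nat set" where
  "Jset R p a k n m i x = {j \<in> active R p a k n m i x. x i j \<noteq> 0}"

definition typeI :: "(nat \<Rightarrow> real \<Rightarrow> real) \<Rightarrow> (nat \<Rightarrow> real \<Rightarrow> real) \<Rightarrow> (nat \<Rightarrow> real) \<Rightarrow> (nat \<Rightarrow> real)
    \<Rightarrow> nat \<Rightarrow> nat \<Rightarrow> nat \<Rightarrow> (nat \<Rightarrow> nat \<Rightarrow> real) \<Rightarrow> bool" where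
  "typeI R p a k n m i x \<longleftrightarrow>
     (\<Sum>j\<in>Jset R p a k n m i x. x i j) < 1 \<and>
     (\<forall>j\<in>Jset R p a k n m i x. psi R p a k i j (x i j) (xT_minus n x i j) = 0)"

definition fragile_assumption :: "(nat \<Rightarrow> real \<Rightarrow> real) \<Rightarrow> (nat \<Rightarrow> real \<Rightarrow> real) \<Rightarrow> (nat \<Rightarrow> real) \<Rightarrow> (nat \<Rightarrow> real)
    \<Rightarrow> nat \<Rightarrow> nat \<Rightarrow> bool" where
  "fragile_assumption R p a k n m \<longleftrightarrow>
     (\<forall>j\<in>{1..m}. \<forall>t\<ge>0. R j t > 1 \<and> 0 \<le> p j t \<and> p j t \<le> 1) \<and>
     (\<forall>j\<in>{1..m}. p j 0 = 0 \<and> (\<forall>t\<ge>1. p j t = 1)) \<and>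
     (\<forall>i\<in>{1..n}. 0 < a i \<and> a i \<le> 1 \<and> 0 < k i) \<and>
     (\<forall>i\<in>{1..n}. \<forall>j\<in>{1..m}.
        continuous_on {0..1} (Feff R p a k i j) \<and>
        (\<exists>F' F''. \<forall>t\<in>{0<..<1}. (Feff R p a k i j has_real_derivative F' t) (at t) \<and>
            (F' has_real_derivative F'' t) (at t) \<and> F' t < 0 \<and> F'' t < 0))"

end

theory Submission
  imports Defs
begin

lemma F_basic:
  assumes A: "fragile_assumption R p a k n m" and i: "i \<in> {1..n}" and j: "j \<in> {1..m}"
  shows "continuous_on {0..1} (Feff R p a k i j)"
    and "\<exists>F' F''. \<forall>t\<in>{0<..<1}. (Feff R p a k i j has_real_derivative F' t) (at t) \<and>
            (F' has_real_derivative F'' t) (at t) \<and> F' t < 0 \<and> F'' t < 0"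
    and "Feff R p a k i j 0 > 0" and "Feff R p a k i j 1 < 0"
    and "0 < a i" "a i \<le> 1"
proof -
  have U: "(\<forall>j\<in>{1..m}. \<forall>t\<ge>0. R j t > 1 \<and> 0 \<le> p j t \<and> p j t \<le> 1)"
     "(\<forall>j\<in>{1..m}. p j 0 = 0 \<and> (\<forall>t\<ge>1. p j t = 1))"
     "(\<forall>i\<in>{1..n}. 0 < a i \<and> a i \<le> 1 \<and> 0 < k i)"
     "(\<forall>i\<in>{1..n}. \<forall>j\<in>{1..m}.
        continuous_on {0..1} (Feff R p a k i j) \<and>
        (\<exists>F' F''. \<forall>t\<in>{0<..<1}. (Feff R p a k i j has_real_derivative F' t) (at t) \<and>
            (F' has_real_derivative F'' t) (at t) \<and> F' t < 0 \<and> F'' t < 0))"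
    using A unfolding fragile_assumption_def by blast+
  show "continuous_on {0..1} (Feff R p a k i j)"
    and "\<exists>F' F''. \<forall>t\<in>{0<..<1}. (Feff R p a k i j has_real_derivative F' t) (at t) \<and>
            (F' has_real_derivative F'' t) (at t) \<and> F' t < 0 \<and> F'' t < 0"
    using U(4) i j by blast+
  show "0 < a i" "a i \<le> 1" using U(3) i by blast+
  have r: "R j 0 > 1" using U(1) j by simp
  have p0: "p j 0 = 0" and p1: "p j 1 = 1" using U(2) j by simp_all
  have ki: "k i > 0" using U(3) i by blast
  show "Feff R p a k i j 0 > 0"
    unfolding Feff_def p0 using r by simp
  show "Feff R p a k i j 1 < 0"
    unfolding Feff_def p1 using ki by simp
qed

lemma F_decr:
  assumes A: "fragile_assumption R p a k n m" and i: "i \<in> {1..n}" and j: "j \<in> {1..m}"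
    and st: "0 \<le> s" "s < t" "t \<le> 1"
  shows "Feff R p a k i j t < Feff R p a k i j s"
proof -
  let ?F = "Feff R p a k i j"
  obtain F' F'' where D: "\<forall>t\<in>{0<..<1}. (?F has_real_derivative F' t) (at t) \<and>
      (F' has_real_derivative F'' t) (at t) \<and> F' t < 0 \<and> F'' t < 0"
    using F_basic(2)[OF A i j] by blast
  have c: "continuous_on {s..t} ?F"
    using continuous_on_subset[OF F_basic(1)[OF A i j]] st by auto
  have d: "?F differentiable (at z)" if "s < z" "z < t" for z
  proof -
    have "z \<in> {0<..<1}" using that st by auto
    thus ?thesis using D unfolding real_differentiable_def by blast
  qed
  obtain l z where z: "s < z" "z < t" "(?F has_real_derivative l) (at z)" "?F t - ?F s = (t - s) * l"
    using MVT[OF st(2) c d] by blast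
  have z01: "z \<in> {0<..<1}" using z st by auto
  have "l = F' z" using DERIV_unique[OF z(3)] D z01 by blast
  hence "l < 0" using D z01 by blast
  hence "(t - s) * l < 0" using st by (simp add: mult_pos_neg)
  thus ?thesis using z(4) by linarith
qed

lemma F_deriv:
  assumes A: "fragile_assumption R p a k n m" and i: "i \<in> {1..n}" and j: "j \<in> {1..m}"
  shows "\<And>t. 0 < t \<Longrightarrow> t < 1 \<Longrightarrow> deriv (Feff R p a k i j) t < 0"
    and "\<And>s t. 0 < s \<Longrightarrow> s \<le> t \<Longrightarrow> t < 1 \<Longrightarrow> deriv (Feff R p a k i j) t \<le> deriv (Feff R p a k i j) s"
proof -
  let ?F = "Feff R p a k i j"
  obtain F' F'' where D: "\<forall>t\<in>{0<..<1}. (?F has_real_derivative F' t) (at t) \<and>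
      (F' has_real_derivative F'' t) (at t) \<and> F' t < 0 \<and> F'' t < 0"
    using F_basic(2)[OF A i j] by blast
  have dd: "deriv ?F t = F' t" if "0 < t" "t < 1" for t
    using D that by (auto intro: DERIV_imp_deriv)
  show "\<And>t. 0 < t \<Longrightarrow> t < 1 \<Longrightarrow> deriv ?F t < 0" using dd D by auto
  show "deriv ?F t \<le> deriv ?F s" if st: "0 < s" "s \<le> t" "t < 1" for s t
  proof (cases "s = t")
    case True thus ?thesis by simp
  next
    case False
    hence lt: "s < t" using st by simp
    have c: "continuous_on {s..t} F'"
    proof (intro continuous_at_imp_continuous_on ballI)
    fix z assume "z \<in> {s..t}"
    hence "z \<in> {0<..<1}" using st by auto
    thus "isCont F' z" using D DERIV_isCont by blast
  qed
    have d: "F' differentiable (at z)" if "s < z" "z < t" for z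
    proof -
      have "z \<in> {0<..<1}" using that st by auto
      thus ?thesis using D unfolding real_differentiable_def by blast
    qed
    obtain l z where z: "s < z" "z < t" "(F' has_real_derivative l) (at z)" "F' t - F' s = (t - s) * l"
      using MVT[OF lt c d] by blast
    have z01: "z \<in> {0<..<1}" using z st by auto
    have "l = F'' z" using DERIV_unique[OF z(3)] D z01 by blast
    hence "l < 0" using D z01 by blast
    hence "(t - s) * l < 0" using lt by (simp add: mult_pos_neg)
    hence "F' t < F' s" using z(4) by linarith
    thus ?thesis using dd st by simp
  qed
qed

lemma omega_props:
  assumes A: "fragile_assumption R p a k n m" and i: "i \<in> {1..n}" and j: "j \<in> {1..m}"
  shows "0 < omega R p a k i j" "omega R p a k i j < 1" "Feff R p a k i j (omega R p a k i j) = 0"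
proof -
  let ?F = "Feff R p a k i j"
  obtain w where w: "0 \<le> w" "w \<le> 1" "?F w = 0"
    using IVT2'[of ?F 1 0 0] F_basic(1,3,4)[OF A i j] by fastforce
  have "w \<noteq> 0" "w \<noteq> 1" using w(3) F_basic(3,4)[OF A i j] by auto
  hence w01: "w \<in> {0<..<1}" using w by auto
  have uniq: "v = w" if "v \<in> {0<..<1} \<and> ?F v = 0" for v
  proof (rule ccontr)
    assume "v \<noteq> w"
    hence "v < w \<or> w < v" by auto
    thus False
    proof
      assume "v < w" thus False using F_decr[OF A i j, of v w] that w01 w by auto
    next
      assume "w < v" thus False using F_decr[OF A i j, of w v] that w01 w by auto
    qed
  qed
  have "omega R p a k i j = w" unfolding omega_def
    by (rule the_equality) (use w01 w uniq in auto)
  thus "0 < omega R p a k i j" "omega R p a k i j < 1" "?F (omega R p a k i j) = 0"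
    using w01 w by auto
qed

lemma GNE_nonneg:
  assumes G: "is_GNE R p a k n m x" and l: "l \<in> {1..n}" and j: "j \<in> {1..m}"
  shows "0 \<le> x l j" "x l j \<le> 1"
proof -
  have "x l \<in> Cm m" using G l unfolding is_GNE_def by blast
  thus "0 \<le> x l j" "x l j \<le> 1" using j unfolding Cm_def by auto
qed

lemma xT_nonneg:
  assumes G: "is_GNE R p a k n m x" and j: "j \<in> {1..m}"
  shows "0 \<le> xT_minus n x i j"
  unfolding xT_minus_def by (rule sum_nonneg) (use GNE_nonneg[OF G _ j] in auto)

lemma xT_split:
  assumes i: "i \<in> {1..n}"
  shows "(\<Sum>l=1..n. x l j) = x i j + xT_minus n x i j"
  unfolding xT_minus_def using sum.remove[of "{1..n}" i "\<lambda>l. x l j"] i by simp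

lemma deviation:
  assumes A: "fragile_assumption R p a k n m" and G: "is_GNE R p a k n m x"
    and T: "typeI R p a k n m i x" and i: "i \<in> {1..n}" and j: "j \<in> {1..m}"
    and act: "j \<in> active R p a k n m i x" and z: "x i j = 0"
  shows False
proof -
  have xP: "x i \<in> policy R p a k n m i x"
    and opt: "\<forall>y\<in>policy R p a k n m i x. util R p a k n m i (x i) x \<ge> util R p a k n m i y x"
    using G i unfolding is_GNE_def by blast+
  have nn: "0 \<le> x i j'" "x i j' \<le> 1" if "j' \<in> {1..m}" for j'
    using GNE_nonneg[OF G i that] by auto
  have pol: "(j' \<in> active R p a k n m i x \<longrightarrow> 0 \<le> x i j' \<and> x i j' \<le> omega R p a k i j' - xT_minus n x i j') \<and>
      (j' \<notin> active R p a k n m i x \<longrightarrow> x i j' = 0)" if "j' \<in> {1..m}" for j'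
    using xP that unfolding policy_def by blast
  define J where "J = Jset R p a k n m i x"
  have JS: "J \<subseteq> {1..m}" unfolding J_def Jset_def active_def by auto
  have "(\<Sum>j'=1..m. x i j') = (\<Sum>j'\<in>J. x i j')"
  proof (rule sum.mono_neutral_right)
    show "finite {1..m}" by simp
    show "J \<subseteq> {1..m}" by (rule JS)
    show "\<forall>j'\<in>{1..m} - J. x i j' = 0"
    proof
      fix j' assume "j' \<in> {1..m} - J"
      hence jm: "j' \<in> {1..m}" and nJ: "j' \<notin> J" by auto
      show "x i j' = 0"
      proof (cases "j' \<in> active R p a k n m i x")
        case True thus ?thesis using nJ unfolding J_def Jset_def by simp
      next
        case False thus ?thesis using pol[OF jm] by simp
      qed
    qed
  qed
  hence S1: "(\<Sum>j'=1..m. x i j') < 1" using T unfolding typeI_def J_def by simp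
  define S where "S = (\<Sum>j'=1..m. x i j')"
  define s where "s = xT_minus n x i j"
  define w where "w = omega R p a k i j"
  have s0: "0 \<le> s" unfolding s_def by (rule xT_nonneg[OF G j])
  have sw: "s < w" using act j unfolding active_def s_def w_def by auto
  have w1: "w < 1" using omega_props[OF A i j] w_def by simp
  have S0: "0 \<le> S" unfolding S_def by (rule sum_nonneg) (use nn in blast)
  define e where "e = min ((w - s)/2) ((1 - S)/2)"
  have e0: "0 < e" using sw S1 unfolding S_def e_def by simp
  have ews: "e + s < w" "e \<le> w - s" "e \<le> 1" "S + e \<le> 1"
  proof -
    have S1': "S < 1" using S1 unfolding S_def .
    have "e \<le> (w - s)/2" unfolding e_def by (rule min.cobounded1)
    moreover have "e \<le> (1 - S)/2" unfolding e_def by (rule min.cobounded2)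
    ultimately show "e + s < w" "e \<le> w - s" "e \<le> 1" "S + e \<le> 1" using sw S0 S1'
      by (simp_all add: field_simps)
  qed
  define v where "v = (x i)(j := e)"
  have sumv: "(\<Sum>j'=1..m. v j') = S + e"
  proof -
    have "(\<Sum>j'=1..m. v j') = v j + (\<Sum>j'\<in>{1..m}-{j}. v j')"
      using sum.remove[of "{1..m}" j v] j by simp
    also have "(\<Sum>j'\<in>{1..m}-{j}. v j') = (\<Sum>j'\<in>{1..m}-{j}. x i j')"
      by (rule sum.cong) (auto simp: v_def)
    also have "\<dots> = S - x i j" using sum.remove[of "{1..m}" j "x i"] j S_def by simp
    finally show ?thesis using z by (simp add: v_def)
  qed
  have vC: "v \<in> Cm m"
    unfolding Cm_def using sumv ews e0 nn by (auto simp: v_def)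
  have vpol: "(j' \<in> active R p a k n m i x \<longrightarrow> 0 \<le> v j' \<and> v j' \<le> omega R p a k i j' - xT_minus n x i j') \<and>
      (j' \<notin> active R p a k n m i x \<longrightarrow> v j' = 0)" if "j' \<in> {1..m}" for j'
  proof (cases "j' = j")
    case True thus ?thesis using act ews e0 unfolding v_def s_def w_def by simp
  next
    case False thus ?thesis using pol[OF that] unfolding v_def by simp
  qed
  have vP: "v \<in> policy R p a k n m i x"
    unfolding policy_def using vC vpol by blast
  define f where "f = (\<lambda>j'. x i j' powr (a i) * Feff R p a k i j' (x i j' + xT_minus n x i j'))"
  define g where "g = (\<lambda>j'. v j' powr (a i) * Feff R p a k i j' (v j' + xT_minus n x i j'))"
  have uf: "util R p a k n m i (x i) x = f j + (\<Sum>j'\<in>{1..m}-{j}. f j')"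
    unfolding util_def f_def using sum.remove[of "{1..m}" j] j by simp
  have ug: "util R p a k n m i v x = g j + (\<Sum>j'\<in>{1..m}-{j}. f j')"
  proof -
    have "util R p a k n m i v x = g j + (\<Sum>j'\<in>{1..m}-{j}. g j')"
      unfolding util_def g_def using sum.remove[of "{1..m}" j] j by simp
    also have "(\<Sum>j'\<in>{1..m}-{j}. g j') = (\<Sum>j'\<in>{1..m}-{j}. f j')"
      by (rule sum.cong) (auto simp: v_def f_def g_def)
    finally show ?thesis .
  qed
  have f0: "f j = 0" unfolding f_def using z by simp
  have "Feff R p a k i j w < Feff R p a k i j (e + s)"
    using F_decr[OF A i j, of "e + s" w] e0 s0 ews w1 by simp
  hence Fpos: "0 < Feff R p a k i j (e + s)" using omega_props(3)[OF A i j] w_def by simp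
  have "g j = e powr (a i) * Feff R p a k i j (e + s)" unfolding g_def v_def s_def by simp
  hence "0 < g j" using Fpos e0 by simp
  hence "util R p a k n m i (x i) x < util R p a k n m i v x" using uf ug f0 by simp
  thus False using opt vP by force
qed

lemma key:
  assumes A: "fragile_assumption R p a k n m" and G: "is_GNE R p a k n m x"
    and T: "typeI R p a k n m i x" and i: "i \<in> {1..n}" and j: "j \<in> {1..m}"
  shows "0 < x i j \<longleftrightarrow> (\<Sum>l=1..n. x l j) < omega R p a k i j"
    and "0 < x i j \<Longrightarrow> x i j * (- deriv (Feff R p a k i j) (\<Sum>l=1..n. x l j))
           = a i * Feff R p a k i j (\<Sum>l=1..n. x l j) \<and> 0 < (\<Sum>l=1..n. x l j) \<and> (\<Sum>l=1..n. x l j) < 1"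
proof -
  define X where "X = (\<Sum>l=1..n. x l j)"
  define s where "s = xT_minus n x i j"
  define w where "w = omega R p a k i j"
  define F where "F = Feff R p a k i j"
  have Xs: "X = x i j + s" unfolding X_def s_def by (rule xT_split[OF i])
  have x0: "0 \<le> x i j" using GNE_nonneg[OF G i j] by simp
  have s0: "0 \<le> s" unfolding s_def by (rule xT_nonneg[OF G j])
  have xP: "x i \<in> policy R p a k n m i x" using G i unfolding is_GNE_def by blast
  have pol: "(j \<in> active R p a k n m i x \<longrightarrow> 0 \<le> x i j \<and> x i j \<le> w - s) \<and>
      (j \<notin> active R p a k n m i x \<longrightarrow> x i j = 0)"
    using xP j unfolding policy_def w_def s_def by blast
  have w01: "0 < w" "w < 1" "F w = 0" using omega_props[OF A i j] unfolding w_def F_def by auto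
  have P1: "X < w \<and> x i j * (- deriv F X) = a i * F X \<and> 0 < X \<and> X < 1" if pos: "0 < x i j"
  proof -
    have act: "j \<in> active R p a k n m i x" using pol pos by auto
    have le: "X \<le> w" using pol act Xs by auto
    have JJ: "j \<in> Jset R p a k n m i x" unfolding Jset_def using act pos by auto
    have psi0: "x i j * deriv F X + a i * F X = 0"
      using T JJ unfolding typeI_def psi_def Xs s_def F_def by auto
    have X0: "0 < X" using Xs pos s0 by simp
    have X1: "X < 1" using le w01 by simp
    have d: "deriv F X < 0" using F_deriv(1)[OF A i j X0 X1] F_def by simp
    have "0 < - deriv F X" using d by simp
    hence "0 < x i j * (- deriv F X)" using pos by (rule mult_pos_pos[rotated])
    hence e1: "x i j * (- deriv F X) = a i * F X" "0 < a i * F X" using psi0 by auto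
    have "0 < F X" using e1(2) F_basic(5)[OF A i j] by (simp add: zero_less_mult_iff)
    hence "X \<noteq> w" using w01 by auto
    thus ?thesis using le e1 X0 X1 by simp
  qed
  have P2: "0 < x i j" if lt: "X < w"
  proof -
    have "s < w" using lt Xs x0 by simp
    hence act: "j \<in> active R p a k n m i x" using j unfolding active_def s_def w_def by simp
    have "x i j \<noteq> 0" using deviation[OF A G T i j act] by blast
    thus ?thesis using x0 by simp
  qed
  show "0 < x i j \<longleftrightarrow> (\<Sum>l=1..n. x l j) < omega R p a k i j"
    using P1 P2 unfolding X_def w_def by blast
  show "0 < x i j \<Longrightarrow> x i j * (- deriv (Feff R p a k i j) (\<Sum>l=1..n. x l j))
           = a i * Feff R p a k i j (\<Sum>l=1..n. x l j) \<and> 0 < (\<Sum>l=1..n. x l j) \<and> (\<Sum>l=1..n. x l j) < 1"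
    using P1 unfolding X_def F_def by blast
qed

lemma cmp:
  assumes A: "fragile_assumption R p a k n m"
    and Gx: "is_GNE R p a k n m x" and Tx: "\<forall>i\<in>{1..n}. typeI R p a k n m i x"
    and Gy: "is_GNE R p a k n m y" and Ty: "\<forall>i\<in>{1..n}. typeI R p a k n m i y"
    and j: "j \<in> {1..m}"
    and lt: "(\<Sum>l=1..n. x l j) < (\<Sum>l=1..n. y l j)"
  shows False
proof -
  define X where "X = (\<Sum>l=1..n. x l j)"
  define Y where "Y = (\<Sum>l=1..n. y l j)"
  have XY: "X < Y" using lt unfolding X_def Y_def .
  have "y l j \<le> x l j" if l: "l \<in> {1..n}" for l
  proof (cases "0 < y l j")
    case False thus ?thesis using GNE_nonneg[OF Gx l j] by simp
  next
    case True
    define F where "F = Feff R p a k l j"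
    define w where "w = omega R p a k l j"
    have Tyl: "typeI R p a k n m l y" using Ty l by blast
    have Txl: "typeI R p a k n m l x" using Tx l by blast
    have Yw: "Y < w" using key(1)[OF A Gy Tyl l j] True unfolding Y_def w_def by simp
    have xpos: "0 < x l j" using key(1)[OF A Gx Txl l j] Yw XY unfolding X_def w_def by simp
    have ey: "y l j * (- deriv F Y) = a l * F Y" "0 < Y" "Y < 1"
      using key(2)[OF A Gy Tyl l j True] unfolding F_def Y_def by auto
    have ex: "x l j * (- deriv F X) = a l * F X" "0 < X" "X < 1"
      using key(2)[OF A Gx Txl l j xpos] unfolding F_def X_def by auto
    have dX: "0 < - deriv F X" using F_deriv(1)[OF A l j ex(2,3)] unfolding F_def by simp
    have dXY: "- deriv F X \<le> - deriv F Y"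
      using F_deriv(2)[OF A l j ex(2) _ ey(3)] XY unfolding F_def by simp
    have w01: "w < 1" "F w = 0" using omega_props[OF A l j] unfolding w_def F_def by auto
    have FY: "0 < F Y" using F_decr[OF A l j, of Y w] ey Yw w01 unfolding F_def by simp
    have FXY: "F Y \<le> F X" using F_decr[OF A l j, of X Y] ex ey XY unfolding F_def by simp
    have al: "0 < a l" using F_basic(5)[OF A l j] .
    have dY: "0 < - deriv F Y" using dX dXY by linarith
    have "y l j = (y l j * (- deriv F Y)) / (- deriv F Y)" using dY by simp
    hence yv: "y l j = a l * F Y / (- deriv F Y)" using ey(1) by metis
    have "x l j = (x l j * (- deriv F X)) / (- deriv F X)" using dX by simp
    hence xv: "x l j = a l * F X / (- deriv F X)" using ex(1) by metis
    have "a l * F Y / (- deriv F Y) \<le> a l * F X / (- deriv F X)"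
      by (rule frac_le) (use al FY FXY dX dXY in auto)
    thus ?thesis using xv yv by simp
  qed
  hence "Y \<le> X" unfolding X_def Y_def by (intro sum_mono) simp
  thus False using XY by simp
qed

theorem theorem9:
  fixes R p :: "nat \<Rightarrow> real \<Rightarrow> real" and a k :: "nat \<Rightarrow> real" and n m :: nat
    and x y :: "nat \<Rightarrow> nat \<Rightarrow> real"
  assumes "n \<ge> 1" and "m \<ge> 1"
    and "fragile_assumption R p a k n m"
    and "is_GNE R p a k n m x" and "\<forall>i\<in>{1..n}. typeI R p a k n m i x"
    and "is_GNE R p a k n m y" and "\<forall>i\<in>{1..n}. typeI R p a k n m i y"
  shows "\<forall>i\<in>{1..n}. \<forall>j\<in>{1..m}. x i j = y i j"
proof (intro ballI)
  fix i j assume i: "i \<in> {1..n}" and j: "j \<in> {1..m}"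
  note A = assms(3) and Gx = assms(4) and Tx = assms(5) and Gy = assms(6) and Ty = assms(7)
  define X where "X = (\<Sum>l=1..n. x l j)"
  define Y where "Y = (\<Sum>l=1..n. y l j)"
  have "\<not> X < Y" using cmp[OF A Gx Tx Gy Ty j] unfolding X_def Y_def by blast
  moreover have "\<not> Y < X" using cmp[OF A Gy Ty Gx Tx j] unfolding X_def Y_def by blast
  ultimately have XY: "X = Y" by simp
  have Txi: "typeI R p a k n m i x" using Tx i by blast
  have Tyi: "typeI R p a k n m i y" using Ty i by blast
  have iff: "0 < x i j \<longleftrightarrow> 0 < y i j"
    using key(1)[OF A Gx Txi i j] key(1)[OF A Gy Tyi i j] XY unfolding X_def Y_def by simp
  show "x i j = y i j"
  proof (cases "0 < x i j")
    case True
    hence yp: "0 < y i j" using iff by simp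
    define F where "F = Feff R p a k i j"
    have ex: "x i j * (- deriv F X) = a i * F X" "0 < X" "X < 1"
      using key(2)[OF A Gx Txi i j True] unfolding F_def X_def by auto
    have ey: "y i j * (- deriv F X) = a i * F X"
      using key(2)[OF A Gy Tyi i j yp] XY unfolding F_def Y_def by auto
    have d0: "0 < - deriv F X" using F_deriv(1)[OF A i j ex(2,3)] unfolding F_def by simp
    have "x i j * (- deriv F X) = y i j * (- deriv F X)" using ex(1) ey by simp
    thus ?thesis using d0 by simp
  next
    case False
    hence "\<not> 0 < y i j" using iff by simp
    thus ?thesis using False GNE_nonneg[OF Gx i j] GNE_nonneg[OF Gy i j] by simp
  qed
qed

end
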